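(* Consider a secure index coding problem $(W_i\mid A_i,P_i)$, $i\in[m]$, on $n$ messages, a securely achievable symmetric rate $R$, and a set function $g:2^{[n]}\to\mathbb R$ satisfying conditions (G1)–(G6) of the context with $R_i=R$ for all $i$. Let $L_1,L_2,\ldots,L_k\subseteq[n]$ be such that for every $j\in[k-1]$ either $L_j - L_{j+1}$ or $L_j\subseteq L_{j+1}$. Then $$g(L_k)\ge g(L_1)+R\cdot\sum_{\ell\in[k-1]}h(L_\ell,L_{\ell+1}).$$
   Context: Secure index coding: $n$ independent uniformly distributed messages $X_i\in\{0,1\}^{t_i}$; $m$ parties, party $i$ with side information $A_i\subseteq[n]$, requested set $W_i\subseteq[n]\setminus A_i$ (possibly empty), interfering set $B_i=[n]\setminus(A_i\cup W_i)$, prohibited set $P_i\subseteq B_i$. A $(\mathbf t,M)$ secure index code is a deterministic surjective encoder $Y=\phi(X_{[n]})\in\{1,\ldots,M\}$ with $H(X_{W_i}\mid Y,X_{A_i})=0$ for all $i$ and $I(X_j;Y\mid X_{A_i})=0$ for all $j\in P_i$; rates $R_i=t_i/\log M$. Standing assumption: the problem is feasible (its symmetric secure capacity is positive). Conditions on $g$: (G1) $\sum_{i\in W}R_i=g(B\cup W)-g(B)=g(W)$ for all $i\in[m]$, $W\subseteq W_i$, $B\subseteq (B_i\cup W_i)\setminus W$; (G2) $g(\emptyset)=0$; (G3) $g([n])\le1$; (G4) $g(S)\le g(S')$ whenever $S\subseteq S'$; (G5) $g(S\cap S')+g(S\cup S')\le g(S)+g(S')$; (G6) $g(B_i)=g(B_i\setminus\{j\})$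 for all $j\in P_i$, $i\in[m]$. Relation $S - S'$: for each $i$ with $P_i\ne\emptyset$ and $T\subseteq[n]\setminus B_i$, $N(i,T)=\{T\cup B_i\setminus\{j\}:j\in P_i\}\cup\{T\cup B_i\}$; repeatedly merge intersecting such families until pairwise disjoint; $S - S'$ iff $S,S'$ lie in the same resulting family. Acyclic sets: $K\subseteq[n]\setminus S$ is acyclic w.r.t. $S$ if it can be ordered $K=\{k_1,\ldots,k_r\}$ so that for each $\ell$ some party $j_\ell$ has $k_\ell\in W_{j_\ell}$ and $S\cup\{k_1,\ldots,k_\ell\}\subseteq B_{j_\ell}\cup W_{j_\ell}$. For $S\subseteq S'$, $h_{\rm MAIS}(S,S')=\max\{|K|:K\subseteq S'\setminus S\text{ acyclic w.r.t. }S\}$. For any $S,S'\subseteq[n]$, $h(S,S')=h_{\rm MAIS}(S,S')$ if $S\subseteq S'$ and $h(S,S')=0$ otherwise. *)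

theory Defs
  imports "HOL-Probability.Probability"
begin

(* Messages are indexed by {..<n} (the paper's [n]), parties by {..<m}.
   A realisation of all messages is x :: nat => nat => bool, where x i is the
   bit string X_i in {0,1}^(t i) (bits b >= t i and messages i >= n are False). *)

type_synonym msgs = "nat \<Rightarrow> nat \<Rightarrow> bool"

definition msg_space :: "nat \<Rightarrow> (nat \<Rightarrow> nat) \<Rightarrow> msgs set" where
  "msg_space n t = {x. \<forall>i b. (n \<le> i \<or> t i \<le> b) \<longrightarrow> \<not> x i b}"

definition Bset :: "nat \<Rightarrow> (nat \<Rightarrow> nat set) \<Rightarrow> (nat \<Rightarrow> nat set) \<Rightarrow> nat \<Rightarrow> nat set" where
  "Bset n A W i = {..<n} - (A i \<union> W i)"

definition sic_problem :: "nat \<Rightarrow> nat \<Rightarrow> (nat \<Rightarrow> nat set) \<Rightarrow> (nat \<Rightarrow> nat set) \<Rightarrow> (nat \<Rightarrow> nat set) \<Rightarrow> bool" where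
  "sic_problem n m A W P \<longleftrightarrow>
     (\<forall>i<m. A i \<subseteq> {..<n} \<and> W i \<subseteq> {..<n} - A i \<and> P i \<subseteq> Bset n A W i)"

(* (t,M) secure index code: deterministic surjective encoder phi onto {1..M};
   messages independent and uniform, i.e. X_[n] uniform on msg_space n t;
   H(X_{W_i} | Y, X_{A_i}) = 0 and I(X_j ; Y | X_{A_i}) = 0 for j in P_i
   (information measures in bits, from HOL-Probability). *)
definition secure_index_code ::
  "nat \<Rightarrow> nat \<Rightarrow> (nat \<Rightarrow> nat set) \<Rightarrow> (nat \<Rightarrow> nat set) \<Rightarrow> (nat \<Rightarrow> nat set)
   \<Rightarrow> (nat \<Rightarrow> nat) \<Rightarrow> nat \<Rightarrow> (msgs \<Rightarrow> nat) \<Rightarrow> bool" where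
  "secure_index_code n m A W P t M \<phi> \<longleftrightarrow>
     (\<forall>i<n. 0 < t i) \<and>
     \<phi> ` msg_space n t = {1..M} \<and>
     (let S = msg_space n t; \<mu> = uniform_count_measure S in
       (\<forall>i<m.
          prob_space.conditional_entropy \<mu> 2
            (count_space ((\<lambda>x. restrict x (W i)) ` S))
            (count_space ((\<lambda>x. (\<phi> x, restrict x (A i))) ` S))
            (\<lambda>x. restrict x (W i)) (\<lambda>x. (\<phi> x, restrict x (A i))) = 0) \<and>
       (\<forall>i<m. \<forall>j\<in>P i.
          prob_space.conditional_mutual_information \<mu> 2
            (count_space ((\<lambda>x. x j) ` S)) (count_space (\<phi> ` S))
            (count_space ((\<lambda>x. restrict x (A i)) ` S))
            (\<lambda>x. x j) \<phi> (\<lambda>x. restrict x (A i)) = 0))"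

(* symmetric rate R securely achievable: for every eps > 0 there is a secure
   (t,M) code with t_i / log M >= R - eps for all i (stated multiplied out). *)
definition sym_securely_achievable ::
  "nat \<Rightarrow> nat \<Rightarrow> (nat \<Rightarrow> nat set) \<Rightarrow> (nat \<Rightarrow> nat set) \<Rightarrow> (nat \<Rightarrow> nat set) \<Rightarrow> real \<Rightarrow> bool" where
  "sym_securely_achievable n m A W P R \<longleftrightarrow>
     (\<forall>\<epsilon>>0. \<exists>t M \<phi>. secure_index_code n m A W P t M \<phi> \<and>
        (\<forall>i<n. (R - \<epsilon>) * log 2 (real M) \<le> real (t i)))"

definition sic_feasible :: "nat \<Rightarrow> nat \<Rightarrow> (nat \<Rightarrow> nat set) \<Rightarrow> (nat \<Rightarrow> nat set) \<Rightarrow> (nat \<Rightarrow> nat set) \<Rightarrow> bool" where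
  "sic_feasible n m A W P \<longleftrightarrow> (\<exists>R>0. sym_securely_achievable n m A W P R)"

definition g_conditions ::
  "nat \<Rightarrow> nat \<Rightarrow> (nat \<Rightarrow> nat set) \<Rightarrow> (nat \<Rightarrow> nat set) \<Rightarrow> (nat \<Rightarrow> nat set) \<Rightarrow> real \<Rightarrow> (nat set \<Rightarrow> real) \<Rightarrow> bool" where
  "g_conditions n m A W P R g \<longleftrightarrow>
     (\<forall>i<m. \<forall>V B. V \<subseteq> W i \<longrightarrow> B \<subseteq> (Bset n A W i \<union> W i) - V \<longrightarrow>
         R * real (card V) = g (B \<union> V) - g B \<and> g (B \<union> V) - g B = g V) \<and>
     g {} = 0 \<and>
     g {..<n} \<le> 1 \<and>
     (\<forall>S S'. S \<subseteq> S' \<longrightarrow> S' \<subseteq> {..<n} \<longrightarrow> g S \<le> g S') \<and>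
     (\<forall>S S'. S \<subseteq> {..<n} \<longrightarrow> S' \<subseteq> {..<n} \<longrightarrow> g (S \<inter> S') + g (S \<union> S') \<le> g S + g S') \<and>
     (\<forall>i<m. \<forall>j\<in>P i. g (Bset n A W i) = g (Bset n A W i - {j}))"

definition Nfam :: "nat \<Rightarrow> (nat \<Rightarrow> nat set) \<Rightarrow> (nat \<Rightarrow> nat set) \<Rightarrow> (nat \<Rightarrow> nat set) \<Rightarrow> nat \<Rightarrow> nat set \<Rightarrow> nat set set" where
  "Nfam n A W P i T = {T \<union> Bset n A W i - {j} | j. j \<in> P i} \<union> {T \<union> Bset n A W i}"

definition Nfams :: "nat \<Rightarrow> nat \<Rightarrow> (nat \<Rightarrow> nat set) \<Rightarrow> (nat \<Rightarrow> nat set) \<Rightarrow> (nat \<Rightarrow> nat set) \<Rightarrow> nat set set set" where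
  "Nfams n m A W P = {Nfam n A W P i T | i T. i < m \<and> P i \<noteq> {} \<and> T \<subseteq> {..<n} - Bset n A W i}"

(* repeatedly merging intersecting families until pairwise disjoint yields the
   classes of the transitive closure of "lie in a common family"; S - S' iff
   S and S' lie in the same resulting (merged) family. *)
definition rel_dash :: "nat \<Rightarrow> nat \<Rightarrow> (nat \<Rightarrow> nat set) \<Rightarrow> (nat \<Rightarrow> nat set) \<Rightarrow> (nat \<Rightarrow> nat set) \<Rightarrow> nat set \<Rightarrow> nat set \<Rightarrow> bool" where
  "rel_dash n m A W P S S' \<longleftrightarrow>
     (S, S') \<in> {(X, Y). \<exists>F\<in>Nfams n m A W P. X \<in> F \<and> Y \<in> F}\<^sup>+"

definition acyclic_wrt :: "nat \<Rightarrow> nat \<Rightarrow> (nat \<Rightarrow> nat set) \<Rightarrow> (nat \<Rightarrow> nat set) \<Rightarrow> nat set \<Rightarrow> nat set \<Rightarrow> bool" where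
  "acyclic_wrt n m A W S K \<longleftrightarrow>
     K \<subseteq> {..<n} - S \<and>
     (\<exists>ks. distinct ks \<and> set ks = K \<and>
        (\<forall>l<length ks. \<exists>j<m. ks ! l \<in> W j \<and>
            S \<union> set (take (Suc l) ks) \<subseteq> Bset n A W j \<union> W j))"

definition h_MAIS :: "nat \<Rightarrow> nat \<Rightarrow> (nat \<Rightarrow> nat set) \<Rightarrow> (nat \<Rightarrow> nat set) \<Rightarrow> nat set \<Rightarrow> nat set \<Rightarrow> nat" where
  "h_MAIS n m A W S S' = Max {card K | K. K \<subseteq> S' - S \<and> acyclic_wrt n m A W S K}"

definition h_fun :: "nat \<Rightarrow> nat \<Rightarrow> (nat \<Rightarrow> nat set) \<Rightarrow> (nat \<Rightarrow> nat set) \<Rightarrow> nat set \<Rightarrow> nat set \<Rightarrow> nat" where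
  "h_fun n m A W S S' = (if S \<subseteq> S' then h_MAIS n m A W S S' else 0)"

end

theory Submission
  imports Defs
begin

lemma nfam_eq:
  assumes gc: "g_conditions n m A W P R g" and prob: "sic_problem n m A W P"
    and F: "F \<in> Nfams n m A W P" and XY: "X \<in> F" "Y \<in> F"
  shows "g X = g Y"
proof -
  obtain i T where F: "F = Nfam n A W P i T" and i: "i < m" and T: "T \<subseteq> {..<n} - Bset n A W i"
    using F unfolding Nfams_def by blast
  let ?B = "Bset n A W i"
  have Bn: "?B \<subseteq> {..<n}" unfolding Bset_def by auto
  have Pi: "P i \<subseteq> ?B" using prob i unfolding sic_problem_def by blast
  have mono: "\<forall>S S'. S \<subseteq> S' \<longrightarrow> S' \<subseteq> {..<n} \<longrightarrow> g S \<le> g S'"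
    and sub: "\<forall>S S'. S \<subseteq> {..<n} \<longrightarrow> S' \<subseteq> {..<n} \<longrightarrow> g (S \<inter> S') + g (S \<union> S') \<le> g S + g S'"
    and g6: "\<forall>i<m. \<forall>j\<in>P i. g (Bset n A W i) = g (Bset n A W i - {j})"
    using gc unfolding g_conditions_def by blast+
  have gx: "g X = g (T \<union> ?B)" if X: "X \<in> F" for X
  proof (cases "X = T \<union> ?B")
    case False
    then obtain j where j: "j \<in> P i" and Xe: "X = T \<union> ?B - {j}" using X F unfolding Nfam_def by blast
    have jB: "j \<in> ?B" using j Pi by blast
    have e1: "?B \<inter> (T \<union> ?B - {j}) = ?B - {j}" using T jB by blast
    have e2: "?B \<union> (T \<union> ?B - {j}) = T \<union> ?B" using jB by blast
    have "g (?B \<inter> (T \<union> ?B - {j})) + g (?B \<union> (T \<union> ?B - {j})) \<le> g ?B + g (T \<union> ?B - {j})"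
      using sub[rule_format, of ?B "T \<union> ?B - {j}"] Bn T by blast
    hence "g (T \<union> ?B) \<le> g (T \<union> ?B - {j})" using e1 e2 g6 i j by simp
    moreover have "g (T \<union> ?B - {j}) \<le> g (T \<union> ?B)" using mono[rule_format, of "T \<union> ?B - {j}" "T \<union> ?B"] Bn T by blast
    ultimately show ?thesis using Xe by simp
  qed simp
  show ?thesis using gx[OF XY(1)] gx[OF XY(2)] by simp
qed

lemma dash_eq:
  assumes gc: "g_conditions n m A W P R g" and prob: "sic_problem n m A W P"
    and d: "rel_dash n m A W P S S'"
  shows "g S = g S'"
proof -
  have "(S, S') \<in> {(X, Y). \<exists>F\<in>Nfams n m A W P. X \<in> F \<and> Y \<in> F}\<^sup>+" using d unfolding rel_dash_def .
  thus ?thesis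
  proof (induction rule: trancl_induct)
    case (base y)
    then obtain F where F: "F \<in> Nfams n m A W P" "S \<in> F" "y \<in> F" by blast
    from nfam_eq[OF gc prob F(1) F(2) F(3)] show ?case by simp
  next
    case (step y z)
    then obtain F where F: "F \<in> Nfams n m A W P" "y \<in> F" "z \<in> F" by blast
    from nfam_eq[OF gc prob F(1) F(2) F(3)] step.IH show ?case by simp
  qed
qed

lemma acyc_gain:
  assumes gc: "g_conditions n m A W P R g"
    and ks: "distinct ks" "set ks \<inter> S = {}"
    and ord: "\<forall>l<length ks. \<exists>j<m. ks ! l \<in> W j \<and> S \<union> set (take (Suc l) ks) \<subseteq> Bset n A W j \<union> W j"
  shows "l \<le> length ks \<Longrightarrow> g (S \<union> set (take l ks)) = g S + R * l"
proof (induction l)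
  case 0 then show ?case by simp
next
  case (Suc l)
  have g1: "\<forall>i<m. \<forall>V B. V \<subseteq> W i \<longrightarrow> B \<subseteq> (Bset n A W i \<union> W i) - V \<longrightarrow>
         R * real (card V) = g (B \<union> V) - g B \<and> g (B \<union> V) - g B = g V"
    using gc unfolding g_conditions_def by (elim conjE) assumption
  have l: "l < length ks" using Suc by simp
  obtain j where j: "j < m" "ks ! l \<in> W j" "S \<union> set (take (Suc l) ks) \<subseteq> Bset n A W j \<union> W j"
    using ord l by blast
  have tk: "take (Suc l) ks = take l ks @ [ks ! l]" using l by (simp add: take_Suc_conv_app_nth)
  have "distinct (take (Suc l) ks)" using ks(1) by simp
  hence nin: "ks ! l \<notin> set (take l ks)" using tk by simp
  have nS: "ks ! l \<notin> S" using ks(2) l by (meson disjoint_iff nth_mem)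
  have "S \<union> set (take l ks) \<subseteq> (Bset n A W j \<union> W j) - {ks ! l}"
    using j(3) nin nS tk by auto
  hence "R * real (card {ks ! l}) = g ((S \<union> set (take l ks)) \<union> {ks ! l}) - g (S \<union> set (take l ks))"
    using g1[rule_format, of j "{ks ! l}" "S \<union> set (take l ks)"] j by auto
  moreover have "S \<union> set (take (Suc l) ks) = (S \<union> set (take l ks)) \<union> {ks ! l}" using tk by auto
  ultimately show ?case using Suc by (simp add: algebra_simps)
qed

lemma sub_step:
  assumes gc: "g_conditions n m A W P R g"
    and SS: "S \<subseteq> S'" and S'n: "S' \<subseteq> {..<n}"
  shows "g S' \<ge> g S + R * real (h_MAIS n m A W S S')"
proof -
  let ?C = "{card K | K. K \<subseteq> S' - S \<and> acyclic_wrt n m A W S K}"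
  have fin: "finite ?C"
  proof -
    have "?C \<subseteq> card ` Pow (S' - S)" by auto
    moreover have "finite (Pow (S' - S))" using S'n finite_subset by blast
    ultimately show ?thesis using finite_subset by blast
  qed
  have ne: "?C \<noteq> {}"
  proof -
    have "acyclic_wrt n m A W S {}" unfolding acyclic_wrt_def by (intro conjI exI[of _ "[]"]) auto
    thus ?thesis by blast
  qed
  have "h_MAIS n m A W S S' \<in> ?C" unfolding h_MAIS_def using Max_in[OF fin ne] .
  hence "\<exists>K. h_MAIS n m A W S S' = card K \<and> K \<subseteq> S' - S \<and> acyclic_wrt n m A W S K"
    by (simp only: mem_Collect_eq)
  then obtain K where K: "h_MAIS n m A W S S' = card K" "K \<subseteq> S' - S" "acyclic_wrt n m A W S K" by (elim exE conjE)
  have "\<exists>ks. distinct ks \<and> set ks = K \<and>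
    (\<forall>l<length ks. \<exists>j<m. ks ! l \<in> W j \<and> S \<union> set (take (Suc l) ks) \<subseteq> Bset n A W j \<union> W j)"
    using K(3) unfolding acyclic_wrt_def by (elim conjE) assumption
  then obtain ks where ks: "distinct ks" "set ks = K"
    "\<forall>l<length ks. \<exists>j<m. ks ! l \<in> W j \<and> S \<union> set (take (Suc l) ks) \<subseteq> Bset n A W j \<union> W j"
    by (elim exE conjE)
  have dj: "set ks \<inter> S = {}" using ks(2) K(2) by blast
  have "g (S \<union> set (take (length ks) ks)) = g S + R * length ks"
    using acyc_gain[OF gc ks(1) dj ks(3), of "length ks"] by simp
  moreover have "card K = length ks" using distinct_card[OF ks(1)] ks(2) by simp
  ultimately have e: "g (S \<union> K) = g S + R * card K" using ks(2) by simp
  have mono: "\<forall>S S'. S \<subseteq> S' \<longrightarrow> S' \<subseteq> {..<n} \<longrightarrow> g S \<le> g S'"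
    using gc unfolding g_conditions_def by (elim conjE) assumption
  have "S \<union> K \<subseteq> S'" using SS K(2) by blast
  hence "g (S \<union> K) \<le> g S'" using mono[rule_format, of "S \<union> K" S'] S'n by simp
  thus ?thesis using e unfolding K(1) by linarith
qed

lemma one_step:
  assumes gc: "g_conditions n m A W P R g" and prob: "sic_problem n m A W P"
    and S'n: "S' \<subseteq> {..<n}"
    and c: "rel_dash n m A W P S S' \<or> S \<subseteq> S'"
  shows "g S' \<ge> g S + R * real (h_fun n m A W S S')"
proof (cases "S \<subseteq> S'")
  case True
  thus ?thesis using sub_step[OF gc True S'n] unfolding h_fun_def by simp
next
  case False
  thus ?thesis using dash_eq[OF gc prob] c unfolding h_fun_def by auto
qed

theorem lemma3:
  fixes n m k :: nat and A W P :: "nat \<Rightarrow> nat set" and R :: real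
    and g :: "nat set \<Rightarrow> real" and L :: "nat \<Rightarrow> nat set"
  assumes prob: "sic_problem n m A W P"
    and feas: "sic_feasible n m A W P"
    and ach: "sym_securely_achievable n m A W P R"
    and gc: "g_conditions n m A W P R g"
    and k: "1 \<le> k"
    and L_sub: "\<forall>j\<in>{1..k}. L j \<subseteq> {..<n}"
    and chain: "\<forall>j\<in>{1..<k}. rel_dash n m A W P (L j) (L (Suc j)) \<or> L j \<subseteq> L (Suc j)"
  shows "g (L k) \<ge> g (L 1) + R * (\<Sum>l\<in>{1..<k}. real (h_fun n m A W (L l) (L (Suc l))))"
  using k L_sub chain
proof (induction k rule: nat_induct_at_least)
  case base then show ?case by simp
next
  case (Suc k)
  have ih: "g (L k) \<ge> g (L 1) + R * (\<Sum>l\<in>{1..<k}. real (h_fun n m A W (L l) (L (Suc l))))"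
  proof (rule Suc.IH)
    show "\<forall>j\<in>{1..k}. L j \<subseteq> {..<n}" using Suc.prems(1) by simp
    show "\<forall>j\<in>{1..<k}. rel_dash n m A W P (L j) (L (Suc j)) \<or> L j \<subseteq> L (Suc j)"
      using Suc.prems(2) by simp
  qed
  have st: "g (L (Suc k)) \<ge> g (L k) + R * real (h_fun n m A W (L k) (L (Suc k)))"
  proof (rule one_step[OF gc prob])
    show "L (Suc k) \<subseteq> {..<n}" using Suc.prems(1) by simp
    show "rel_dash n m A W P (L k) (L (Suc k)) \<or> L k \<subseteq> L (Suc k)"
      using Suc.prems(2) Suc.hyps by simp
  qed
  have "(\<Sum>l\<in>{1..<Suc k}. real (h_fun n m A W (L l) (L (Suc l))))
     = (\<Sum>l\<in>{1..<k}. real (h_fun n m A W (L l) (L (Suc l)))) + real (h_fun n m A W (L k) (L (Suc k)))"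
    using Suc.hyps by simp
  thus ?case using ih st by (simp add: algebra_simps)
qed

end
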